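(* Assume the pair $(\mathcal D,\mathcal F)$ is good. For every $r\ge0$, the function $\Phi_r$ is continuous and real-valued on $(X\times X)\times(\mathcal F\times(0,\infty))$, concave in $(x,y)\in X\times X$ and convex in $(\phi,\alpha)\in\mathcal F\times(0,\infty)$, and $$\sup_{x,y\in X}\ \inf_{\phi\in\mathcal F,\alpha>0}\Phi_r(x,y;\phi,\alpha)=\inf_{\phi\in\mathcal F,\alpha>0}\ \sup_{x,y\in X}\Phi_r(x,y;\phi,\alpha)=2\Phi_*(r).$$ Moreover, $r\mapsto\Phi_*(r)$ is nonnegative and concave on $[0,\infty)$.
   Context: Let $(\Omega,P)$ be a Polish space equipped with a $\sigma$-finite Borel measure $P$, let $\mathcal M\subset\mathbb R^m$, and let $\mathcal D=\{p_\mu\}_{\mu\in\mathcal M}$ be a parametric density family: for each $\mu\in\mathcal M$, $p_\mu$ is a nonnegative Borel function on $\Omega$ with $\int_\Omega p_\mu\,dP=1$. Let $\mathcal F$ be a finite-dimensional linear space of Borel functions on $\Omega$ containing the constants. The pair $(\mathcal D,\mathcal F)$ is called good if: (1) $\mathcal M$ is an open convex subset of $\mathbb R^m$; (2) $p_\mu(\omega)>0$ for all $\mu\in\mathcal M$, $\omega\in\Omega$; (3) for all $\mu,\nu\in\mathcal M$ the function $\omega\mapsto\ln(p_\mu(\omega)/p_\nu(\omega))$ belongs to $\mathcal F$; (4) for every $\phi\in\mathcal F$ the function $\mu\mapsto\ln\int_\Omega e^{\phi(\omega)}p_\mu(\omega)P(d\omega)$ is well defined (finite) and concave on $\mathcal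 M$. Let $X\subset\mathbb R^n$ be a nonempty convex compact set, $x\mapsto A(x)$ an affine map $\mathbb R^n\to\mathbb R^m$ with $A(X)\subset\mathcal M$, and $g\in\mathbb R^n$. For $r\ge0$, $x,y\in X$, $\phi\in\mathcal F$, $\alpha>0$ define $$\Phi_r(x,y;\phi,\alpha)=g^Tx-g^Ty+\alpha\ln\int_\Omega e^{\phi(\omega)/\alpha}p_{A(y)}(\omega)P(d\omega)+\alpha\ln\int_\Omega e^{-\phi(\omega)/\alpha}p_{A(x)}(\omega)P(d\omega)+2\alpha r,$$ and $\Phi_*(r)=\tfrac12\inf_{\phi\in\mathcal F,\alpha>0}\sup_{x,y\in X}\Phi_r(x,y;\phi,\alpha)$. *)

theory Defs
  imports "HOL-Analysis.Analysis"
begin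

text \<open>The finite-dimensional space F is presented through a finite spanning family
  b :: 'k \<Rightarrow> 'a \<Rightarrow> real ('k a finite index type); its elements are the linear
  combinations with coefficient vectors c :: real^'k.\<close>

definition fcomb :: "('k::finite \<Rightarrow> 'a \<Rightarrow> real) \<Rightarrow> real^'k \<Rightarrow> 'a \<Rightarrow> real" where
  "fcomb b c = (\<lambda>\<omega>. \<Sum>k\<in>UNIV. c $ k * b k \<omega>)"

definition Fspace :: "('k::finite \<Rightarrow> 'a \<Rightarrow> real) \<Rightarrow> ('a \<Rightarrow> real) set" where
  "Fspace b = range (fcomb b)"

definition density_family :: "'a measure \<Rightarrow> 'm set \<Rightarrow> ('m \<Rightarrow> 'a \<Rightarrow> real) \<Rightarrow> bool" where
  "density_family P M p \<longleftrightarrow>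
     (\<forall>\<mu>\<in>M. p \<mu> \<in> borel_measurable P \<and> (\<forall>\<omega>\<in>space P. p \<mu> \<omega> \<ge> 0)
             \<and> (\<integral>\<^sup>+\<omega>. ennreal (p \<mu> \<omega>) \<partial>P) = 1)"

definition good_pair :: "'a measure \<Rightarrow> 'm::euclidean_space set \<Rightarrow> ('m \<Rightarrow> 'a \<Rightarrow> real)
     \<Rightarrow> ('a \<Rightarrow> real) set \<Rightarrow> bool" where
  "good_pair P M p F \<longleftrightarrow>
     open M \<and> convex M
   \<and> (\<forall>\<mu>\<in>M. \<forall>\<omega>\<in>space P. p \<mu> \<omega> > 0)
   \<and> (\<forall>\<mu>\<in>M. \<forall>\<nu>\<in>M. (\<lambda>\<omega>. ln (p \<mu> \<omega> / p \<nu> \<omega>)) \<in> F)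
   \<and> (\<forall>\<phi>\<in>F. (\<forall>\<mu>\<in>M. integrable P (\<lambda>\<omega>. exp (\<phi> \<omega>) * p \<mu> \<omega>))
             \<and> concave_on M (\<lambda>\<mu>. ln (\<integral>\<omega>. exp (\<phi> \<omega>) * p \<mu> \<omega> \<partial>P)))"

definition PhiR :: "'a measure \<Rightarrow> ('m \<Rightarrow> 'a \<Rightarrow> real) \<Rightarrow> ('n::real_inner \<Rightarrow> 'm) \<Rightarrow> 'n
     \<Rightarrow> real \<Rightarrow> 'n \<Rightarrow> 'n \<Rightarrow> ('a \<Rightarrow> real) \<Rightarrow> real \<Rightarrow> real" where
  "PhiR P p A g r x y \<phi> \<alpha> =
     inner g x - inner g y
     + \<alpha> * ln (\<integral>\<omega>. exp (\<phi> \<omega> / \<alpha>) * p (A y) \<omega> \<partial>P)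
     + \<alpha> * ln (\<integral>\<omega>. exp (- \<phi> \<omega> / \<alpha>) * p (A x) \<omega> \<partial>P)
     + 2 * \<alpha> * r"

text \<open>\<Phi>_*(r) = 1/2 inf_{\<phi>,\<alpha>} sup_{x,y} \<Phi>_r, computed in the extended reals
  (so that no junk value of real Inf/Sup is involved).\<close>
definition PhiStar :: "'a measure \<Rightarrow> ('m \<Rightarrow> 'a \<Rightarrow> real) \<Rightarrow> ('n::real_inner \<Rightarrow> 'm) \<Rightarrow> 'n
     \<Rightarrow> 'n set \<Rightarrow> ('a \<Rightarrow> real) set \<Rightarrow> real \<Rightarrow> ereal" where
  "PhiStar P p A g X F r =
     ereal (1/2) * (INF \<phi>\<alpha>\<in>F \<times> {0<..}. SUP xy\<in>X \<times> X.
        ereal (PhiR P p A g r (fst xy) (snd xy) (fst \<phi>\<alpha>) (snd \<phi>\<alpha>)))"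

end

theory Submission
  imports Defs
begin

lemma comb_gt:
  fixes d a a' u v :: real
  assumes "d < a" "d < a'" "0 \<le> u" "0 \<le> v" "u + v = 1"
  shows "d < u * a + v * a'"
proof (cases "u = 0")
  case True then show ?thesis using assms by simp
next
  case False
  then have "u * d < u * a" using assms by simp
  moreover have "v * d \<le> v * a'" using assms by (simp add: mult_left_mono)
  moreover have "u * d + v * d = d" using assms by (metis distrib_right mult_1)
  ultimately show ?thesis by linarith
qed

lemma concave_on_subset: "concave_on T f \<Longrightarrow> S \<subseteq> T \<Longrightarrow> convex S \<Longrightarrow> concave_on S f"
  unfolding concave_on_def by (rule convex_on_subset)

lemma two_point:
  fixes g1 g2 :: "'x::real_normed_vector \<Rightarrow> real"
  assumes K: "compact K" "convex K"
    and c1: "continuous_on K g1" and c2: "continuous_on K g2"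
    and k1: "concave_on K g1" and k2: "concave_on K g2"
    and lt: "\<forall>x\<in>K. min (g1 x) (g2 x) < c"
  shows "\<exists>t\<in>{0..1}. \<forall>x\<in>K. (1-t)*g1 x + t * g2 x < c"
proof (cases "K = {}")
  case True then show ?thesis by auto
next
  case False
  have "continuous_on K (\<lambda>x. min (g1 x) (g2 x))"
    using c1 c2 by (intro continuous_intros)
  then obtain x0 where x0: "x0 \<in> K" "\<forall>y\<in>K. min (g1 y) (g2 y) \<le> min (g1 x0) (g2 x0)"
    using continuous_attains_sup[OF K(1) False] by blast
  define d where "d = min (g1 x0) (g2 x0)"
  have dc: "d < c" using lt x0 d_def by auto
  have dle: "\<And>x. x \<in> K \<Longrightarrow> min (g1 x) (g2 x) \<le> d" using x0 d_def by auto
  define S where "S = {z::real\<times>real. \<exists>x\<in>K. fst z \<le> g1 x \<and> snd z \<le> g2 x}"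
  define T where "T = {z::real\<times>real. d < fst z \<and> d < snd z}"
  have cS: "convex S"
  proof (rule convexI)
    fix z1 z2 :: "real\<times>real" and u v :: real
    assume z: "z1 \<in> S" "z2 \<in> S" and uv: "0 \<le> u" "0 \<le> v" "u + v = 1"
    obtain x where h: "x \<in> K" "fst z1 \<le> g1 x" "snd z1 \<le> g2 x" using z S_def by auto
    obtain y where h2: "y \<in> K" "fst z2 \<le> g1 y" "snd z2 \<le> g2 y" using z S_def by auto
    have m: "u *\<^sub>R x + v *\<^sub>R y \<in> K" using K(2) h h2 uv by (simp add: convex_def)
    have "g1 (u *\<^sub>R x + v *\<^sub>R y) \<ge> u * g1 x + v * g1 y"
      using k1 h h2 uv by (simp add: concave_on_iff)
    moreover have "g2 (u *\<^sub>R x + v *\<^sub>R y) \<ge> u * g2 x + v * g2 y"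
      using k2 h h2 uv by (simp add: concave_on_iff)
    moreover have "u * fst z1 + v * fst z2 \<le> u * g1 x + v * g1 y" "u * snd z1 + v * snd z2 \<le> u * g2 x + v * g2 y"
      using h h2 uv by (auto intro!: add_mono mult_left_mono)
    ultimately show "u *\<^sub>R z1 + v *\<^sub>R z2 \<in> S"
      using m unfolding S_def by (auto intro!: bexI[of _ "u *\<^sub>R x + v *\<^sub>R y"])
  qed
  have cT: "convex T"
  proof (rule convexI)
    fix z1 z2 :: "real\<times>real" and u v :: real
    assume z: "z1 \<in> T" "z2 \<in> T" and uv: "0 \<le> u" "0 \<le> v" "u + v = 1"
    then show "u *\<^sub>R z1 + v *\<^sub>R z2 \<in> T" unfolding T_def
      using comb_gt[of d "fst z1" "fst z2" u v] comb_gt[of d "snd z1" "snd z2" u v] by auto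
  qed
  have Sne: "S \<noteq> {}" using x0 unfolding S_def by force
  have Tne: "T \<noteq> {}" unfolding T_def by (metis (mono_tags, lifting) empty_iff fst_conv snd_conv lt_ex mem_Collect_eq gt_ex)
  have dis: "S \<inter> T = {}"
    using dle unfolding S_def T_def by (force)
  obtain a b where ab: "a \<noteq> 0" "\<forall>x\<in>S. inner a x \<le> b" "\<forall>x\<in>T. inner a x \<ge> b"
    using separating_hyperplane_sets[OF cS cT Sne Tne dis] by blast
  obtain a1 a2 where a: "a = (a1, a2)" by (cases a)
  have a1: "a1 \<ge> 0"
  proof (rule ccontr)
    assume n: "\<not> a1 \<ge> 0"
    define Q where "Q = a1*(d+1)+a2*(d+1)-b+1"
    define t where "t = max 0 (Q / (-a1))"
    have "(d+1+t, d+1) \<in> T" unfolding T_def t_def by auto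
    then have "a1*(d+1+t) + a2*(d+1) \<ge> b" using ab a by auto
    moreover have "a1*(d+1+t) + a2*(d+1) \<le> b - 1"
    proof (cases "Q \<le> 0")
      case True
      have "Q / (-a1) \<le> 0" using True n by (intro divide_nonpos_pos) auto
      then have "t = 0" unfolding t_def by simp
      then show ?thesis using True unfolding Q_def by simp
    next
      case False
      then have "Q / (-a1) \<ge> 0" using n by (intro divide_nonneg_pos) auto
      then have "t = Q / (-a1)" unfolding t_def by simp
      then have "a1 * t = - Q" using n by (simp add: field_simps)
      then show ?thesis unfolding Q_def by (simp add: algebra_simps)
    qed
    ultimately show False by simp
  qed
  have a2: "a2 \<ge> 0"
  proof (rule ccontr)
    assume n: "\<not> a2 \<ge> 0"
    define Q where "Q = a1*(d+1)+a2*(d+1)-b+1"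
    define t where "t = max 0 (Q / (-a2))"
    have "(d+1, d+1+t) \<in> T" unfolding T_def t_def by auto
    then have "a1*(d+1) + a2*(d+1+t) \<ge> b" using ab a by auto
    moreover have "a1*(d+1) + a2*(d+1+t) \<le> b - 1"
    proof (cases "Q \<le> 0")
      case True
      have "Q / (-a2) \<le> 0" using True n by (intro divide_nonpos_pos) auto
      then have "t = 0" unfolding t_def by simp
      then show ?thesis using True unfolding Q_def by simp
    next
      case False
      then have "Q / (-a2) \<ge> 0" using n by (intro divide_nonneg_pos) auto
      then have "t = Q / (-a2)" unfolding t_def by simp
      then have "a2 * t = - Q" using n by (simp add: field_simps)
      then show ?thesis unfolding Q_def by (simp add: algebra_simps)
    qed
    ultimately show False by simp
  qed
  define s where "s = a1 + a2"
  have "a1 \<noteq> 0 \<or> a2 \<noteq> 0" using ab(1) a by (auto simp: zero_prod_def)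
  then have s: "s > 0" using a1 a2 s_def by auto
  define e where "e = (c - d)/2"
  have e: "e > 0" using dc e_def by simp
  have "(d+e, d+e) \<in> T" unfolding T_def using e by auto
  then have bT: "s * (d+e) \<ge> b" using ab a s_def by (auto simp: algebra_simps)
  show ?thesis
  proof (intro bexI[of _ "a2/s"] ballI)
    fix x assume x: "x \<in> K"
    have "(g1 x, g2 x) \<in> S" unfolding S_def using x by auto
    then have "a1 * g1 x + a2 * g2 x \<le> b" using ab a by auto
    then have "a1 * g1 x + a2 * g2 x \<le> s * (d+e)" using bT by simp
    then have "(a1 * g1 x + a2 * g2 x)/s \<le> d + e" using s by (simp add: field_simps)
    moreover have "(1 - a2/s) * g1 x + a2/s * g2 x = (a1 * g1 x + a2 * g2 x)/s"
    proof -
      have e1: "1 - a2/s = a1/s" using s unfolding s_def by (simp add: field_simps)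
      show ?thesis unfolding e1 by (simp add: add_divide_distrib)
    qed
    moreover have "d + e < c" using e_def dc by simp
    ultimately show "(1 - a2/s) * g1 x + a2/s * g2 x < c" by linarith
  next
    show "a2/s \<in> {0..1}" using a1 a2 s s_def by auto
  qed
qed


lemma finite_mm:
  fixes f :: "'x::real_normed_vector \<Rightarrow> 'y::real_vector \<Rightarrow> real"
  assumes cont: "\<forall>y\<in>Y. continuous_on K (\<lambda>x. f x y)"
    and conc: "\<forall>y\<in>Y. concave_on K (\<lambda>x. f x y)"
    and conv: "\<forall>x\<in>K. convex_on Y (f x)"
    and Yc: "convex Y" and Yne: "Y \<noteq> {}"
  shows "finite Y0 \<Longrightarrow> Y0 \<subseteq> Y \<Longrightarrow> K' \<subseteq> K \<Longrightarrow> compact K' \<Longrightarrow> convex K'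
    \<Longrightarrow> \<forall>x\<in>K'. \<exists>y\<in>Y0. f x y < c \<Longrightarrow> \<exists>yb\<in>Y. \<forall>x\<in>K'. f x yb < c"
proof (induction Y0 arbitrary: K' rule: finite_induct)
  case empty
  then show ?case using Yne by auto
next
  case (insert y0 Y0)
  define K'' where "K'' = {x\<in>K'. c \<le> f x y0}"
  have y0: "y0 \<in> Y" using insert by auto
  have ct0: "continuous_on K' (\<lambda>x. f x y0)"
    using cont y0 insert.prems(2) continuous_on_subset by blast
  have "closed K'" using insert.prems(3) compact_imp_closed by blast
  then have "closed (K' \<inter> (\<lambda>x. f x y0) -` {c..})"
    using continuous_closed_preimage[OF ct0] by blast
  moreover have KK: "K'' = K' \<inter> (\<lambda>x. f x y0) -` {c..}" unfolding K''_def by auto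
  ultimately have "closed K''" by simp
  have cK'': "compact K''" unfolding KK
    using compact_Int_closed[OF insert.prems(3) \<open>closed (K' \<inter> _)\<close>] by (simp add: Int_absorb)
  have vK'': "convex K''"
  proof (rule convexI)
    fix x1 x2 u v assume h: "x1 \<in> K''" "x2 \<in> K''" "0 \<le> (u::real)" "0 \<le> v" "u + v = 1"
    have m: "u *\<^sub>R x1 + v *\<^sub>R x2 \<in> K'" using insert.prems(4) h unfolding K''_def convex_def by auto
    have cy0: "concave_on K (\<lambda>x. f x y0)" using conc y0 by blast
    have "x1 \<in> K" "x2 \<in> K" using h insert.prems(2) unfolding K''_def by auto
    then have "f (u *\<^sub>R x1 + v *\<^sub>R x2) y0 \<ge> u * f x1 y0 + v * f x2 y0"
      using cy0 h unfolding concave_on_iff by blast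
    moreover have "u * f x1 y0 + v * f x2 y0 \<ge> u * c + v * c"
      using h unfolding K''_def by (auto intro!: add_mono mult_left_mono)
    moreover have "u * c + v * c = c" using h by (metis distrib_right mult_1)
    ultimately show "u *\<^sub>R x1 + v *\<^sub>R x2 \<in> K''" using m unfolding K''_def by auto
  qed
  have ex'': "\<forall>x\<in>K''. \<exists>y\<in>Y0. f x y < c"
  proof
    fix x assume "x \<in> K''"
    then have x: "x \<in> K'" "c \<le> f x y0" by (auto simp: K''_def)
    then obtain y where "y \<in> insert y0 Y0" "f x y < c" using insert.prems(5) by blast
    then show "\<exists>y\<in>Y0. f x y < c" using x by auto
  qed
  have Y0s: "Y0 \<subseteq> Y" using insert.prems(1) by auto
  have K''s: "K'' \<subseteq> K" using insert.prems(2) K''_def by auto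
  obtain yb' where yb': "yb' \<in> Y" "\<forall>x\<in>K''. f x yb' < c"
    using insert.IH[OF Y0s K''s cK'' vK'' ex''] by blast
  have ct1: "continuous_on K' (\<lambda>x. f x yb')"
    using cont yb' insert.prems(2) continuous_on_subset by blast
  have cc0: "concave_on K' (\<lambda>x. f x y0)"
    using conc y0 insert.prems(2,4) concave_on_subset
    by blast
  have cc1: "concave_on K' (\<lambda>x. f x yb')"
    using conc yb' insert.prems(2,4) concave_on_subset
    by blast
  have "\<forall>x\<in>K'. min (f x yb') (f x y0) < c"
  proof
    fix x assume x: "x \<in> K'"
    show "min (f x yb') (f x y0) < c"
    proof (cases "c \<le> f x y0")
      case True
      then have "x \<in> K''" using x K''_def by auto
      then show ?thesis using yb' by (simp add: min_less_iff_disj)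
    next
      case False then show ?thesis by (simp add: min_less_iff_disj)
    qed
  qed
  then obtain t where t: "t \<in> {0..1}" "\<forall>x\<in>K'. (1-t) * f x yb' + t * f x y0 < c"
    using two_point[OF insert.prems(3,4) ct1 ct0 cc1 cc0] by blast
  show ?case
  proof (intro bexI[of _ "(1-t) *\<^sub>R yb' + t *\<^sub>R y0"] ballI)
    fix x assume x: "x \<in> K'"
    have cx: "convex_on Y (f x)" using conv x insert.prems(2) by blast
    have "f x ((1-t) *\<^sub>R yb' + t *\<^sub>R y0) \<le> (1-t) * f x yb' + t * f x y0"
      using convex_onD[OF cx] t(1) yb'(1) y0 by auto
    moreover have "(1-t) * f x yb' + t * f x y0 < c" using t(2) x by blast
    ultimately show "f x ((1-t) *\<^sub>R yb' + t *\<^sub>R y0) < c" by linarith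
  next
    show "(1-t) *\<^sub>R yb' + t *\<^sub>R y0 \<in> Y" using Yc yb' y0 t unfolding convex_def by auto
  qed
qed


lemma minimax:
  fixes f :: "'x::real_normed_vector \<Rightarrow> 'y::real_vector \<Rightarrow> real"
  assumes Kc: "compact K" and Kv: "convex K"
    and cont: "\<forall>y\<in>Y. continuous_on K (\<lambda>x. f x y)"
    and conc: "\<forall>y\<in>Y. concave_on K (\<lambda>x. f x y)"
    and conv: "\<forall>x\<in>K. convex_on Y (f x)"
    and Yc: "convex Y" and Yne: "Y \<noteq> {}"
  shows "(SUP x\<in>K. INF y\<in>Y. ereal (f x y)) = (INF y\<in>Y. SUP x\<in>K. ereal (f x y))"
proof (rule antisym)
  show "(SUP x\<in>K. INF y\<in>Y. ereal (f x y)) \<le> (INF y\<in>Y. SUP x\<in>K. ereal (f x y))"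
  proof (intro SUP_least INF_greatest)
    fix x y assume xy: "x \<in> K" "y \<in> Y"
    have "(INF y\<in>Y. ereal (f x y)) \<le> ereal (f x y)" using xy(2) by (rule INF_lower)
    also have "\<dots> \<le> (SUP x\<in>K. ereal (f x y))" using xy(1) by (rule SUP_upper)
    finally show "(INF y\<in>Y. ereal (f x y)) \<le> (SUP x\<in>K. ereal (f x y))" .
  qed
next
  show "(INF y\<in>Y. SUP x\<in>K. ereal (f x y)) \<le> (SUP x\<in>K. INF y\<in>Y. ereal (f x y))"
  proof (rule ccontr)
    assume "\<not> ?thesis"
    then have "(SUP x\<in>K. INF y\<in>Y. ereal (f x y)) < (INF y\<in>Y. SUP x\<in>K. ereal (f x y))" by simp
    then obtain c where c: "(SUP x\<in>K. INF y\<in>Y. ereal (f x y)) < ereal c"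
      "ereal c < (INF y\<in>Y. SUP x\<in>K. ereal (f x y))"
      using ereal_dense2 by blast
    have ex: "\<forall>x\<in>K. \<exists>y\<in>Y. f x y < c"
    proof
      fix x assume "x \<in> K"
      then have "(INF y\<in>Y. ereal (f x y)) \<le> (SUP x\<in>K. INF y\<in>Y. ereal (f x y))"
        by (rule SUP_upper)
      then have "(INF y\<in>Y. ereal (f x y)) < ereal c"
        using c(1) by (rule le_less_trans)
      then obtain y where "y \<in> Y" "ereal (f x y) < ereal c" unfolding INF_less_iff by blast
      then show "\<exists>y\<in>Y. f x y < c" by auto
    qed
    define U where "U y = (SOME U. open U \<and> U \<inter> K = (\<lambda>x. f x y) -` {..<c} \<inter> K)" for y
    have U: "open (U y) \<and> U y \<inter> K = (\<lambda>x. f x y) -` {..<c} \<inter> K" if "y \<in> Y" for y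
    proof -
      have "\<exists>U. open U \<and> U \<inter> K = (\<lambda>x. f x y) -` {..<c} \<inter> K"
      proof -
        have co: "continuous_on K (\<lambda>x. f x y)" using cont that by blast
        show ?thesis
          using co[unfolded continuous_on_open_invariant, rule_format, of "{..<c}"] by simp
      qed
      then show ?thesis unfolding U_def by (rule someI_ex)
    qed
    have "K \<subseteq> (\<Union>y\<in>Y. U y)"
    proof
      fix x assume x: "x \<in> K"
      then obtain y where y: "y \<in> Y" "f x y < c" using ex by blast
      then have "x \<in> (\<lambda>x. f x y) -` {..<c} \<inter> K" using x by simp
      then have "x \<in> U y \<inter> K" using U[OF y(1)] by simp
      then show "x \<in> (\<Union>y\<in>Y. U y)" using y(1) by blast
    qed
    then obtain Y0 where Y0: "Y0 \<subseteq> Y" "finite Y0" "K \<subseteq> (\<Union>y\<in>Y0. U y)"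
      using compactE_image[OF Kc, of Y U] U by metis
    have "\<forall>x\<in>K. \<exists>y\<in>Y0. f x y < c"
    proof
      fix x assume x: "x \<in> K"
      then obtain y where y: "y \<in> Y0" "x \<in> U y" using Y0 by blast
      then have yY: "y \<in> Y" using Y0 by blast
      have "x \<in> U y \<inter> K" using y x by simp
      then have "x \<in> (\<lambda>x. f x y) -` {..<c} \<inter> K" using U[OF yY] by simp
      then show "\<exists>y\<in>Y0. f x y < c" using y(1) by auto
    qed
    then obtain yb where yb: "yb \<in> Y" "\<forall>x\<in>K. f x yb < c"
      using finite_mm[OF cont conc conv Yc Yne Y0(2,1) order_refl Kc Kv] by blast
    have "(INF y\<in>Y. SUP x\<in>K. ereal (f x y)) \<le> (SUP x\<in>K. ereal (f x yb))"
      using yb(1) by (rule INF_lower)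
    also have "\<dots> \<le> ereal c" using yb(2) by (intro SUP_least) auto
    finally show False using c(2) by simp
  qed
qed


lemma convex_local_lip:
  fixes h :: "'v::real_normed_vector \<Rightarrow> real"
  assumes cv: "convex_on UNIV h" and bd: "\<forall>c. dist c c0 \<le> 1 \<longrightarrow> h c \<le> B"
    and cc: "dist c c0 \<le> 1"
  shows "\<bar>h c - h c0\<bar> \<le> (B - h c0) * dist c c0"
proof (cases "c = c0")
  case True then show ?thesis by simp
next
  case False
  define s where "s = dist c c0"
  have s: "0 < s" "s \<le> 1" using False cc s_def by auto
  define e where "e = c0 + (1/s) *\<^sub>R (c - c0)"
  have de: "dist e c0 = 1" unfolding e_def s_def using s
    by (simp add: dist_norm s_def dist_commute)
  have ce: "c = (1 - s) *\<^sub>R c0 + s *\<^sub>R e" unfolding e_def using s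
    by (simp add: algebra_simps)
  have "h c \<le> (1 - s) * h c0 + s * h e"
    unfolding ce using s by (intro convex_onD[OF cv]) auto
  moreover have "h e \<le> B" using bd de by simp
  moreover have "s * h e \<le> s * B" using \<open>h e \<le> B\<close> s by (simp add: mult_left_mono)
  ultimately have up: "h c - h c0 \<le> s * (B - h c0)"
    by (simp add: algebra_simps)
  define e' where "e' = c0 - (1/s) *\<^sub>R (c - c0)"
  have de': "dist e' c0 = 1" unfolding e'_def s_def using s
    by (simp add: dist_norm s_def dist_commute)
  have ce': "c0 = (1 - s/(1+s)) *\<^sub>R c + (s/(1+s)) *\<^sub>R e'"
  proof -
    have h1: "(1 - s/(1+s)) = 1/(1+s)" using s by (simp add: field_simps)
    have h2: "(s/(1+s)) *\<^sub>R e' = (s/(1+s)) *\<^sub>R c0 - (1/(1+s)) *\<^sub>R (c - c0)"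
      unfolding e'_def using s by (simp add: algebra_simps)
    have h3: "1/(1+s) + s/(1+s) = 1" using s by (simp add: field_simps)
    have h4: "(1/(1+s)) *\<^sub>R c0 + (s/(1+s)) *\<^sub>R c0 = c0"
      by (metis h3 scaleR_add_left scaleR_one)
    have "(1/(1+s)) *\<^sub>R c + ((s/(1+s)) *\<^sub>R c0 - (1/(1+s)) *\<^sub>R (c - c0))
          = (1/(1+s)) *\<^sub>R c0 + (s/(1+s)) *\<^sub>R c0"
      by (simp add: algebra_simps)
    then show ?thesis unfolding h1 h2 h4 by simp
  qed
  have "h c0 \<le> (1 - s/(1+s)) * h c + (s/(1+s)) * h e'"
    using s by (subst ce', intro convex_onD[OF cv]) auto
  moreover have "h e' \<le> B" using bd de' by simp
  moreover have "(s/(1+s)) * h e' \<le> (s/(1+s)) * B" using \<open>h e' \<le> B\<close> s by (intro mult_left_mono) auto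
  ultimately have "h c0 \<le> (1 - s/(1+s)) * h c + (s/(1+s)) * B"
    by linarith
  moreover have "(1 - s/(1+s)) * h c + (s/(1+s)) * B = (h c + s*B)/(1+s)"
  proof -
    have h1: "1 - s/(1+s) = 1/(1+s)" using s by (simp add: field_simps)
    show ?thesis unfolding h1 by (simp add: add_divide_distrib)
  qed
  ultimately have "h c0 \<le> (h c + s*B)/(1+s)" by simp
  then have "(1+s) * h c0 \<le> h c + s * B" using s by (simp add: pos_le_divide_eq mult.commute)
  then have lo: "h c0 - h c \<le> s * (B - h c0)" by (simp add: algebra_simps)
  show ?thesis using up lo unfolding s_def by (simp add: abs_le_iff mult.commute)
qed

lemma finite_delta:
  assumes "finite V" "\<forall>v\<in>V. \<exists>d>0. \<forall>x. D x < d \<longrightarrow> P v x"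
  shows "\<exists>d>(0::real). \<forall>v\<in>V. \<forall>x. D x < d \<longrightarrow> P v x"
  using assms
proof (induction V rule: finite_induct)
  case empty then show ?case by (auto intro: exI[of _ 1])
next
  case (insert v V)
  then obtain d1 where d1: "d1 > 0" "\<forall>v\<in>V. \<forall>x. D x < d1 \<longrightarrow> P v x" by auto
  obtain d2 where d2: "d2 > 0" "\<forall>x. D x < d2 \<longrightarrow> P v x" using insert.prems by auto
  show ?case
    using d1 d2 by (intro exI[of _ "min d1 d2"]) auto
qed

lemma joint_cont:
  fixes f :: "'u::metric_space \<Rightarrow> 'v::euclidean_space \<Rightarrow> real"
  assumes c1: "\<And>c. continuous_on U (\<lambda>\<mu>. f \<mu> c)"
    and cv: "\<And>\<mu>. \<mu> \<in> U \<Longrightarrow> convex_on UNIV (f \<mu>)"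
  shows "continuous_on (U \<times> UNIV) (\<lambda>z. f (fst z) (snd z))"
  unfolding continuous_on_iff
proof (intro ballI allI impI)
  fix z0 :: "'u \<times> 'v" and e :: real assume z0: "z0 \<in> U \<times> UNIV" "0 < e"
  obtain \<mu>0 c0 where z0e: "z0 = (\<mu>0, c0)" by (cases z0)
  have mu0: "\<mu>0 \<in> U" using z0 z0e by auto
  obtain V where V: "finite V" "cbox (c0 - (\<Sum>i\<in>Basis. 1 *\<^sub>R i)) (c0 + (\<Sum>i\<in>Basis. 1 *\<^sub>R i)) = convex hull V"
    using cube_convex_hull[of 1 c0] by auto
  have ball_sub: "c \<in> convex hull V" if "dist c c0 \<le> 1" for c
  proof -
    have "\<bar>(c - c0) \<bullet> i\<bar> \<le> 1" if "i \<in> Basis" for i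
      using Basis_le_norm[OF that, of "c - c0"] \<open>dist c c0 \<le> 1\<close> by (simp add: dist_norm)
    then have "c \<in> cbox (c0 - (\<Sum>i\<in>Basis. 1 *\<^sub>R i)) (c0 + (\<Sum>i\<in>Basis. 1 *\<^sub>R i))"
      unfolding mem_box by (auto simp: inner_diff_left inner_add_left abs_le_iff) (smt (verit, best))+
    then show ?thesis using V(2) by simp
  qed
  have Vne: "V \<noteq> {}" using ball_sub[of c0] by auto
  define B0 where "B0 = Max ((f \<mu>0) ` V)"
  have B0: "\<And>v. v \<in> V \<Longrightarrow> f \<mu>0 v \<le> B0" unfolding B0_def using V(1) by auto
  have "\<forall>v\<in>V. \<exists>d>0. \<forall>\<mu>. dist \<mu> \<mu>0 < d \<longrightarrow> (\<mu> \<in> U \<longrightarrow> f \<mu> v < f \<mu>0 v + 1)"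
  proof
    fix v assume "v \<in> V"
    obtain d where "d > 0" "\<forall>\<mu>\<in>U. dist \<mu> \<mu>0 < d \<longrightarrow> dist (f \<mu> v) (f \<mu>0 v) < 1"
      using c1[of v, unfolded continuous_on_iff] mu0 by (meson zero_less_one)
    then show "\<exists>d>0. \<forall>\<mu>. dist \<mu> \<mu>0 < d \<longrightarrow> (\<mu> \<in> U \<longrightarrow> f \<mu> v < f \<mu>0 v + 1)"
      by (intro exI[of _ d]) (auto simp: dist_real_def abs_less_iff)
  qed
  from finite_delta[OF V(1) this] obtain \<eta>1 where \<eta>1: "\<eta>1 > 0"
    "\<forall>v\<in>V. \<forall>\<mu>. dist \<mu> \<mu>0 < \<eta>1 \<longrightarrow> (\<mu> \<in> U \<longrightarrow> f \<mu> v < f \<mu>0 v + 1)" by blast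
  have "min (e/2) 1 > 0" using z0 by simp
  then obtain \<eta>2 where \<eta>2: "\<eta>2 > 0" "\<forall>\<mu>\<in>U. dist \<mu> \<mu>0 < \<eta>2 \<longrightarrow> dist (f \<mu> c0) (f \<mu>0 c0) < min (e/2) 1"
    using c1[of c0, unfolded continuous_on_iff] mu0 by blast
  define B where "B = B0 + 1"
  have "f \<mu>0 c0 \<le> B0"
    using convex_on_convex_hull_bound[OF convex_on_subset[OF cv[OF mu0]], of V B0] B0 ball_sub[of c0] by auto
  define K0 where "K0 = B - f \<mu>0 c0 + 1"
  have K0: "K0 \<ge> 2" using \<open>f \<mu>0 c0 \<le> B0\<close> unfolding K0_def B_def by simp
  define \<delta> where "\<delta> = min (min \<eta>1 \<eta>2) (min 1 (e/(2*K0)))"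
  have \<delta>: "\<delta> > 0" unfolding \<delta>_def using \<eta>1 \<eta>2 K0 z0 by auto
  show "\<exists>d>0. \<forall>z\<in>U \<times> UNIV. dist z z0 < d \<longrightarrow> dist (f (fst z) (snd z)) (f (fst z0) (snd z0)) < e"
  proof (intro exI[of _ \<delta>] conjI ballI impI)
    show "\<delta> > 0" by fact
    fix z :: "'u \<times> 'v" assume z: "z \<in> U \<times> UNIV" "dist z z0 < \<delta>"
    obtain \<mu> c where ze: "z = (\<mu>, c)" by (cases z)
    have mu: "\<mu> \<in> U" using z ze by auto
    have dmu: "dist \<mu> \<mu>0 < \<delta>" using dist_fst_le[of z z0] z ze z0e by simp
    have dc: "dist c c0 < \<delta>" using dist_snd_le[of z z0] z ze z0e by simp
    have fv: "\<forall>v\<in>V. f \<mu> v \<le> B"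
      using \<eta>1(2) dmu mu B0 unfolding \<delta>_def B_def by (smt (verit, best))
    have bd: "\<forall>c'. dist c' c0 \<le> 1 \<longrightarrow> f \<mu> c' \<le> B"
      using convex_on_convex_hull_bound[OF convex_on_subset[OF cv[OF mu]], of V B] fv ball_sub by auto
    have dc1: "dist c c0 \<le> 1" using dc unfolding \<delta>_def by simp
    have lip: "\<bar>f \<mu> c - f \<mu> c0\<bar> \<le> (B - f \<mu> c0) * dist c c0"
      by (rule convex_local_lip[OF cv[OF mu] bd dc1])
    have c0d: "\<bar>f \<mu> c0 - f \<mu>0 c0\<bar> < min (e/2) 1"
      using \<eta>2(2) mu dmu unfolding \<delta>_def by (simp add: dist_real_def)
    have "B - f \<mu> c0 \<le> K0" using c0d unfolding K0_def by (simp add: abs_less_iff)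
    then have "(B - f \<mu> c0) * dist c c0 \<le> K0 * dist c c0" by (simp add: mult_right_mono)
    also have "K0 * dist c c0 \<le> K0 * (e/(2*K0))"
      using dc K0 unfolding \<delta>_def by (intro mult_left_mono) auto
    also have "K0 * (e/(2*K0)) = e/2" using K0 by simp
    finally have "\<bar>f \<mu> c - f \<mu> c0\<bar> \<le> e/2" using lip by simp
    then have a1: "f \<mu> c - f \<mu> c0 \<le> e/2" "f \<mu> c0 - f \<mu> c \<le> e/2"
      using abs_le_D1 abs_le_D2 by fastforce+
    have "\<bar>f \<mu> c0 - f \<mu>0 c0\<bar> < e/2" using c0d by simp
    then have a2: "f \<mu> c0 - f \<mu>0 c0 < e/2" "f \<mu>0 c0 - f \<mu> c0 < e/2"
      by (metis abs_less_iff minus_diff_eq)+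
    have "\<bar>f \<mu> c - f \<mu>0 c0\<bar> < e" using a1 a2 by (simp add: abs_less_iff)
    then show "dist (f (fst z) (snd z)) (f (fst z0) (snd z0)) < e"
      using ze z0e by (simp add: dist_real_def)
  qed
qed


lemma fcomb_add: "fcomb b (c + d) \<omega> = fcomb b c \<omega> + fcomb b d \<omega>"
  unfolding fcomb_def by (simp add: distrib_right sum.distrib)

lemma fcomb_scaleR: "fcomb b (r *\<^sub>R c) \<omega> = r * fcomb b c \<omega>"
  unfolding fcomb_def by (simp add: sum_distrib_left mult.assoc)

lemma fcomb_in: "fcomb b c \<in> Fspace b"
  unfolding Fspace_def by simp

lemma Fspace_E: "\<phi> \<in> Fspace b \<Longrightarrow> \<exists>c. \<phi> = fcomb b c"
  unfolding Fspace_def by auto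

lemma Fspace_scale: "\<phi> \<in> Fspace b \<Longrightarrow> (\<lambda>\<omega>. r * \<phi> \<omega>) \<in> Fspace b"
proof -
  assume "\<phi> \<in> Fspace b"
  then obtain c where c: "\<phi> = fcomb b c" using Fspace_E by blast
  have "(\<lambda>\<omega>. r * \<phi> \<omega>) = fcomb b (r *\<^sub>R c)" unfolding c by (rule ext) (simp add: fcomb_scaleR)
  then show ?thesis by (simp add: fcomb_in)
qed

lemma int_pos:
  fixes q :: "'a \<Rightarrow> real"
  assumes int: "integrable P (\<lambda>\<omega>. exp (u \<omega>) * q \<omega>)"
    and qpos: "\<forall>\<omega>\<in>space P. q \<omega> > 0"
    and one: "(\<integral>\<^sup>+\<omega>. ennreal (q \<omega>) \<partial>P) = 1"
  shows "(\<integral>\<omega>. exp (u \<omega>) * q \<omega> \<partial>P) > 0"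
proof -
  have nn: "AE \<omega> in P. 0 \<le> exp (u \<omega>) * q \<omega>" using qpos by (auto intro!: AE_I2 less_imp_le)
  have ge: "(\<integral>\<omega>. exp (u \<omega>) * q \<omega> \<partial>P) \<ge> 0" by (rule integral_nonneg_AE[OF nn])
  moreover have "(\<integral>\<omega>. exp (u \<omega>) * q \<omega> \<partial>P) \<noteq> 0"
  proof
    assume "(\<integral>\<omega>. exp (u \<omega>) * q \<omega> \<partial>P) = 0"
    then have z: "AE \<omega> in P. exp (u \<omega>) * q \<omega> = 0"
      using integral_nonneg_eq_0_iff_AE[OF int nn] by simp
    have "AE \<omega> in P. False"
      using z by (rule AE_mp) (use qpos in \<open>auto intro!: AE_I2\<close>)
    then have "(\<integral>\<^sup>+\<omega>. ennreal (q \<omega>) \<partial>P) = (\<integral>\<^sup>+\<omega>. 0 \<partial>P)"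
      by (intro nn_integral_cong_AE) (auto elim: eventually_mono)
    then show False using one by simp
  qed
  ultimately show ?thesis by simp
qed

lemma exp_comb_le:
  fixes a b t :: real
  assumes "0 \<le> t" "t \<le> 1"
  shows "exp ((1-t) * a + t * b) \<le> (1-t) * exp a + t * exp b"
  using convex_onD[OF exp_convex, of t a b] assms by simp

lemma holder_ln:
  fixes q u v :: "'a \<Rightarrow> real"
  assumes iu: "integrable P (\<lambda>\<omega>. exp (u \<omega>) * q \<omega>)"
    and iv: "integrable P (\<lambda>\<omega>. exp (v \<omega>) * q \<omega>)"
    and iw: "integrable P (\<lambda>\<omega>. exp ((1-t) * u \<omega> + t * v \<omega>) * q \<omega>)"
    and qpos: "\<forall>\<omega>\<in>space P. q \<omega> > 0"
    and Ap: "(\<integral>\<omega>. exp (u \<omega>) * q \<omega> \<partial>P) > 0"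
    and Bp: "(\<integral>\<omega>. exp (v \<omega>) * q \<omega> \<partial>P) > 0"
    and Wp: "(\<integral>\<omega>. exp ((1-t) * u \<omega> + t * v \<omega>) * q \<omega> \<partial>P) > 0"
    and t: "0 \<le> t" "t \<le> 1"
  shows "ln (\<integral>\<omega>. exp ((1-t) * u \<omega> + t * v \<omega>) * q \<omega> \<partial>P)
      \<le> (1-t) * ln (\<integral>\<omega>. exp (u \<omega>) * q \<omega> \<partial>P) + t * ln (\<integral>\<omega>. exp (v \<omega>) * q \<omega> \<partial>P)"
proof -
  define A where "A = (\<integral>\<omega>. exp (u \<omega>) * q \<omega> \<partial>P)"
  define B where "B = (\<integral>\<omega>. exp (v \<omega>) * q \<omega> \<partial>P)"
  define W where "W = (\<integral>\<omega>. exp ((1-t) * u \<omega> + t * v \<omega>) * q \<omega> \<partial>P)"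
  define L where "L = (1-t) * ln A + t * ln B"
  have A: "A > 0" and B: "B > 0" and W: "W > 0" using Ap Bp Wp A_def B_def W_def by auto
  have pw: "exp ((1-t) * u \<omega> + t * v \<omega>) * q \<omega> * exp (- L)
      \<le> (1-t) * (exp (u \<omega>) * q \<omega> / A) + t * (exp (v \<omega>) * q \<omega> / B)"
    if "\<omega> \<in> space P" for \<omega>
  proof -
    have "exp ((1-t) * u \<omega> + t * v \<omega>) * exp (- L)
        = exp ((1-t) * (u \<omega> - ln A) + t * (v \<omega> - ln B))"
      unfolding L_def by (simp add: exp_add[symmetric] algebra_simps)
    also have "\<dots> \<le> (1-t) * exp (u \<omega> - ln A) + t * exp (v \<omega> - ln B)"
      by (rule exp_comb_le[OF t])
    also have "\<dots> = (1-t) * (exp (u \<omega>) / A) + t * (exp (v \<omega>) / B)"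
      using A B by (simp add: exp_diff)
    finally have "exp ((1-t) * u \<omega> + t * v \<omega>) * exp (- L)
        \<le> (1-t) * (exp (u \<omega>) / A) + t * (exp (v \<omega>) / B)" .
    then have "exp ((1-t) * u \<omega> + t * v \<omega>) * exp (- L) * q \<omega>
        \<le> ((1-t) * (exp (u \<omega>) / A) + t * (exp (v \<omega>) / B)) * q \<omega>"
      using qpos that by (intro mult_right_mono) auto
    then show ?thesis by (simp add: algebra_simps)
  qed
  have "(\<integral>\<omega>. exp ((1-t) * u \<omega> + t * v \<omega>) * q \<omega> * exp (- L) \<partial>P)
      \<le> (\<integral>\<omega>. (1-t) * (exp (u \<omega>) * q \<omega> / A) + t * (exp (v \<omega>) * q \<omega> / B) \<partial>P)"
    using pw iu iv iw by (intro integral_mono) auto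
  also have "\<dots> = (1-t) * (A / A) + t * (B / B)"
    using iu iv unfolding A_def B_def by (simp add: integral_add)
  also have "\<dots> = 1" using A B by simp
  finally have "W * exp (- L) \<le> 1" unfolding W_def by simp
  then have "W \<le> exp L" by (simp add: exp_minus field_simps)
  then have "ln W \<le> L" using W by (metis ln_exp ln_mono)
  then show ?thesis unfolding W_def L_def A_def B_def .
qed


definition LH :: "'a measure \<Rightarrow> ('m \<Rightarrow> 'a \<Rightarrow> real) \<Rightarrow> ('k::finite \<Rightarrow> 'a \<Rightarrow> real) \<Rightarrow> 'm \<Rightarrow> real^'k \<Rightarrow> real"
  where "LH P p b \<mu> c = ln (\<integral>\<omega>. exp (fcomb b c \<omega>) * p \<mu> \<omega> \<partial>P)"

lemma good_int:
  assumes "good_pair P M p (Fspace b)" "\<mu> \<in> M" "\<phi> \<in> Fspace b"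
  shows "integrable P (\<lambda>\<omega>. exp (\<phi> \<omega>) * p \<mu> \<omega>)"
  using assms unfolding good_pair_def by blast

lemma good_conc:
  assumes "good_pair P M p (Fspace b)" "\<phi> \<in> Fspace b"
  shows "concave_on M (\<lambda>\<mu>. ln (\<integral>\<omega>. exp (\<phi> \<omega>) * p \<mu> \<omega> \<partial>P))"
  using assms unfolding good_pair_def by blast

lemma good_pos:
  assumes good: "good_pair P M p (Fspace b)" and dens: "density_family P M p"
    and "\<mu> \<in> M" "\<phi> \<in> Fspace b"
  shows "(\<integral>\<omega>. exp (\<phi> \<omega>) * p \<mu> \<omega> \<partial>P) > 0"
proof (rule int_pos)
  show "integrable P (\<lambda>\<omega>. exp (\<phi> \<omega>) * p \<mu> \<omega>)" using good_int assms by blast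
  show "\<forall>\<omega>\<in>space P. 0 < p \<mu> \<omega>" using good assms(3) unfolding good_pair_def by blast
  show "(\<integral>\<^sup>+\<omega>. ennreal (p \<mu> \<omega>) \<partial>P) = 1" using dens assms(3) unfolding density_family_def by blast
qed

lemma LH_convex:
  fixes b :: "'k::finite \<Rightarrow> 'a \<Rightarrow> real"
  assumes good: "good_pair P M p (Fspace b)" and dens: "density_family P M p" and mu: "\<mu> \<in> M"
  shows "convex_on UNIV (LH P p b \<mu>)"
proof (rule convex_onI)
  fix t :: real and c1 c2 :: "real^'k" assume t: "0 < t" "t < 1"
  define u where "u = fcomb b c1"
  define v where "v = fcomb b c2"
  have e: "fcomb b ((1 - t) *\<^sub>R c1 + t *\<^sub>R c2) = (\<lambda>\<omega>. (1-t) * u \<omega> + t * v \<omega>)"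
    unfolding u_def v_def by (rule ext) (simp add: fcomb_add fcomb_scaleR)
  have inF: "fcomb b ((1 - t) *\<^sub>R c1 + t *\<^sub>R c2) \<in> Fspace b" "u \<in> Fspace b" "v \<in> Fspace b"
    unfolding u_def v_def by (auto simp: fcomb_in)
  have iw: "integrable P (\<lambda>\<omega>. exp ((1-t) * u \<omega> + t * v \<omega>) * p \<mu> \<omega>)"
    using good_int[OF good mu inF(1)] unfolding e .
  have Wp: "(\<integral>\<omega>. exp ((1-t) * u \<omega> + t * v \<omega>) * p \<mu> \<omega> \<partial>P) > 0"
    using good_pos[OF good dens mu inF(1)] unfolding e .
  have "ln (\<integral>\<omega>. exp ((1-t) * u \<omega> + t * v \<omega>) * p \<mu> \<omega> \<partial>P)
      \<le> (1-t) * ln (\<integral>\<omega>. exp (u \<omega>) * p \<mu> \<omega> \<partial>P) + t * ln (\<integral>\<omega>. exp (v \<omega>) * p \<mu> \<omega> \<partial>P)"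
    by (rule holder_ln[OF good_int[OF good mu inF(2)] good_int[OF good mu inF(3)] iw _
          good_pos[OF good dens mu inF(2)] good_pos[OF good dens mu inF(3)] Wp])
      (use good mu t in \<open>auto simp: good_pair_def\<close>)
  then show "LH P p b \<mu> ((1 - t) *\<^sub>R c1 + t *\<^sub>R c2) \<le> (1 - t) * LH P p b \<mu> c1 + t * LH P p b \<mu> c2"
    unfolding LH_def e u_def v_def .
qed simp

lemma LH_cont_mu:
  assumes good: "good_pair P M p (Fspace b)"
  shows "continuous_on M (\<lambda>\<mu>. LH P p b \<mu> c)"
proof -
  have "concave_on M (\<lambda>\<mu>. LH P p b \<mu> c)"
    unfolding LH_def using good_conc[OF good fcomb_in] .
  then have "convex_on M (\<lambda>\<mu>. - LH P p b \<mu> c)" by (simp add: concave_on_def)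
  moreover have "open M" using good unfolding good_pair_def by blast
  ultimately have "continuous_on M (\<lambda>\<mu>. - LH P p b \<mu> c)" using convex_on_continuous by blast
  then have "continuous_on M (\<lambda>\<mu>. - (- LH P p b \<mu> c))" by (rule continuous_on_minus)
  then show ?thesis by simp
qed

lemma LH_joint:
  fixes M :: "'m::euclidean_space set"
  assumes good: "good_pair P M p (Fspace b)" and dens: "density_family P M p"
  shows "continuous_on (M \<times> UNIV) (\<lambda>z. LH P p b (fst z) (snd z))"
  by (rule joint_cont) (use LH_cont_mu[OF good] LH_convex[OF good dens] in auto)

lemma LH_zero:
  assumes good: "good_pair P M p (Fspace b)" and dens: "density_family P M p" and mu: "\<mu> \<in> M"
  shows "LH P p b \<mu> 0 = 0"
proof -
  have pm: "p \<mu> \<in> borel_measurable P" and pn: "\<forall>\<omega>\<in>space P. p \<mu> \<omega> \<ge> 0"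
    and one: "(\<integral>\<^sup>+\<omega>. ennreal (p \<mu> \<omega>) \<partial>P) = 1"
    using dens mu unfolding density_family_def by auto
  have "(\<integral>\<omega>. p \<mu> \<omega> \<partial>P) = enn2real (\<integral>\<^sup>+\<omega>. ennreal (p \<mu> \<omega>) \<partial>P)"
    by (rule integral_eq_nn_integral[OF pm]) (use pn in auto)
  then have "(\<integral>\<omega>. p \<mu> \<omega> \<partial>P) = 1" using one by simp
  moreover have "fcomb b 0 = (\<lambda>\<omega>. 0)" unfolding fcomb_def by (rule ext) simp
  ultimately show ?thesis unfolding LH_def by simp
qed

lemma fcomb_neg: "fcomb b (- c) \<omega> = - fcomb b c \<omega>"
  unfolding fcomb_def by (simp add: sum_negf)

lemma PhiR_LH:
  assumes "\<alpha> \<noteq> 0"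
  shows "PhiR P p A g r x y (fcomb b c) \<alpha> = inner g x - inner g y
     + \<alpha> * LH P p b (A y) ((1/\<alpha>) *\<^sub>R c) + \<alpha> * LH P p b (A x) (- ((1/\<alpha>) *\<^sub>R c)) + 2 * \<alpha> * r"
proof -
  have e1: "fcomb b ((1/\<alpha>) *\<^sub>R c) = (\<lambda>\<omega>. fcomb b c \<omega> / \<alpha>)"
    by (rule ext) (simp add: fcomb_scaleR)
  have e2: "fcomb b (- ((1/\<alpha>) *\<^sub>R c)) = (\<lambda>\<omega>. - fcomb b c \<omega> / \<alpha>)"
    by (rule ext) (simp add: fcomb_neg fcomb_scaleR)
  show ?thesis unfolding PhiR_def LH_def e1 e2 by simp
qed

lemma A_aff:
  assumes "linear (\<lambda>x. A x - A 0)"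
  shows "A ((1-t) *\<^sub>R x + t *\<^sub>R y) = (1-t) *\<^sub>R A x + t *\<^sub>R (A y :: 'm::real_vector)"
proof -
  define l where "l x = A x - A 0" for x
  have ll: "linear l" using assms unfolding l_def .
  have "l ((1-t) *\<^sub>R x + t *\<^sub>R y) = (1-t) *\<^sub>R l x + t *\<^sub>R l y"
    using ll by (simp add: linear_add linear_scale)
  then show ?thesis unfolding l_def by (simp add: algebra_simps)
qed

lemma concave_on_affine_comp:
  assumes G: "concave_on M G"
    and L: "\<And>z1 z2 t. L ((1-t) *\<^sub>R z1 + t *\<^sub>R z2) = (1-t) *\<^sub>R L z1 + t *\<^sub>R L z2"
    and sub: "L ` S \<subseteq> M" and S: "convex S"
  shows "concave_on S (\<lambda>z. G (L z))"
  unfolding concave_on_def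
proof (rule convex_onI)
  fix t :: real and x y assume t: "0 < t" "t < 1" "x \<in> S" "y \<in> S"
  have "G ((1-t) *\<^sub>R L x + t *\<^sub>R L y) \<ge> (1-t) * G (L x) + t * G (L y)"
    using concave_onD[OF G, of t "L x" "L y"] t sub by auto
  then show "- G (L ((1 - t) *\<^sub>R x + t *\<^sub>R y)) \<le> (1 - t) * - G (L x) + t * - G (L y)"
    unfolding L by simp
qed (rule S)

lemma convex_on_cong':
  assumes "convex_on S f" "\<And>x. x \<in> S \<Longrightarrow> f x = g x"
  shows "convex_on S g"
proof -
  have cS: "convex S" using assms(1) convex_on_imp_convex by blast
  show ?thesis unfolding convex_on_def
  proof (intro conjI cS ballI allI impI)
    fix x y u v assume h: "x \<in> S" "y \<in> S" "0 \<le> (u::real)" "0 \<le> v" "u + v = 1"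
    have comb: "u *\<^sub>R x + v *\<^sub>R y \<in> S" using cS h by (simp add: convexD)
    have e: "f (u *\<^sub>R x + v *\<^sub>R y) = g (u *\<^sub>R x + v *\<^sub>R y)" "f x = g x" "f y = g y"
      using assms(2) comb h by blast+
    have "f (u *\<^sub>R x + v *\<^sub>R y) \<le> u * f x + v * f y"
      using assms(1) h unfolding convex_on_def by blast
    then show "g (u *\<^sub>R x + v *\<^sub>R y) \<le> u * g x + v * g y"
      unfolding e .
  qed
qed

lemma concave_on_cong':
  assumes "concave_on S f" "\<And>x. x \<in> S \<Longrightarrow> f x = g x"
  shows "concave_on S g"
proof -
  have "convex_on S (\<lambda>x. - f x)" using assms(1) by (simp add: concave_on_def)
  then have "convex_on S (\<lambda>x. - g x)" by (rule convex_on_cong') (simp add: assms(2))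
  then show ?thesis by (simp add: concave_on_def)
qed

lemma perspective:
  fixes h :: "'v::real_vector \<Rightarrow> real"
  assumes h: "convex_on UNIV h"
  shows "convex_on (UNIV \<times> {0<..}) (\<lambda>z. snd z * h ((1 / snd z) *\<^sub>R fst z))"
proof (rule convex_onI)
  fix t :: real and z1 z2 :: "'v \<times> real"
  assume t: "0 < t" "t < 1" "z1 \<in> UNIV \<times> {0<..}" "z2 \<in> UNIV \<times> {0<..}"
  obtain c1 a1 where z1: "z1 = (c1, a1)" by (cases z1)
  obtain c2 a2 where z2: "z2 = (c2, a2)" by (cases z2)
  have a: "a1 > 0" "a2 > 0" using t z1 z2 by auto
  define a where "a = (1-t) * a1 + t * a2"
  have ap: "a > 0" unfolding a_def using a t by (simp add: add_pos_pos)
  define l where "l = t * a2 / a"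
  have l: "0 \<le> l" "l \<le> 1" "1 - l = (1-t) * a1 / a"
    unfolding l_def using ap a t by (auto simp: field_simps a_def)
  have comb: "(1 / a) *\<^sub>R ((1-t) *\<^sub>R c1 + t *\<^sub>R c2) = (1-l) *\<^sub>R ((1/a1) *\<^sub>R c1) + l *\<^sub>R ((1/a2) *\<^sub>R c2)"
  proof -
    have k1: "(1-l)*(1/a1) = (1-t)/a" using l(3) a by (simp add: field_simps)
    have k2: "l*(1/a2) = t/a" unfolding l_def using a by (simp add: field_simps)
    have "(1-l) *\<^sub>R ((1/a1) *\<^sub>R c1) + l *\<^sub>R ((1/a2) *\<^sub>R c2) = ((1-t)/a) *\<^sub>R c1 + (t/a) *\<^sub>R c2"
      by (simp only: scaleR_scaleR k1 k2)
    also have "\<dots> = (1 / a) *\<^sub>R ((1-t) *\<^sub>R c1 + t *\<^sub>R c2)"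
      by (simp add: scaleR_add_right)
    finally show ?thesis by simp
  qed
  have "h ((1 / a) *\<^sub>R ((1-t) *\<^sub>R c1 + t *\<^sub>R c2)) \<le> (1-l) * h ((1/a1) *\<^sub>R c1) + l * h ((1/a2) *\<^sub>R c2)"
  proof -
    have "h ((1-l) *\<^sub>R ((1/a1) *\<^sub>R c1) + l *\<^sub>R ((1/a2) *\<^sub>R c2)) \<le> (1-l) * h ((1/a1) *\<^sub>R c1) + l * h ((1/a2) *\<^sub>R c2)"
      by (rule convex_onD[OF h]) (use l in auto)
    then show ?thesis unfolding comb .
  qed
  then have "a * h ((1 / a) *\<^sub>R ((1-t) *\<^sub>R c1 + t *\<^sub>R c2)) \<le> a * ((1-l) * h ((1/a1) *\<^sub>R c1) + l * h ((1/a2) *\<^sub>R c2))"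
    using ap by (simp add: mult_left_mono)
  also have "\<dots> = (1-t) * (a1 * h ((1/a1) *\<^sub>R c1)) + t * (a2 * h ((1/a2) *\<^sub>R c2))"
  proof -
    have m1: "a*(1-l) = (1-t)*a1" using l(3) ap by (simp add: field_simps)
    have m2: "a*l = t*a2" unfolding l_def using ap by simp
    have "a * ((1-l) * h ((1/a1) *\<^sub>R c1) + l * h ((1/a2) *\<^sub>R c2))
      = (a*(1-l)) * h ((1/a1) *\<^sub>R c1) + (a*l) * h ((1/a2) *\<^sub>R c2)" by (simp add: algebra_simps)
    then show ?thesis unfolding m1 m2 by simp
  qed
  finally have calc: "a * h ((1 / a) *\<^sub>R ((1-t) *\<^sub>R c1 + t *\<^sub>R c2))
      \<le> (1-t) * (a1 * h ((1/a1) *\<^sub>R c1)) + t * (a2 * h ((1/a2) *\<^sub>R c2))" .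
  have fz: "fst ((1-t) *\<^sub>R z1 + t *\<^sub>R z2) = (1-t) *\<^sub>R c1 + t *\<^sub>R c2"
    "snd ((1-t) *\<^sub>R z1 + t *\<^sub>R z2) = a" unfolding z1 z2 a_def by simp_all
  show "snd ((1 - t) *\<^sub>R z1 + t *\<^sub>R z2) * h ((1 / snd ((1 - t) *\<^sub>R z1 + t *\<^sub>R z2)) *\<^sub>R fst ((1 - t) *\<^sub>R z1 + t *\<^sub>R z2))
         \<le> (1 - t) * (snd z1 * h ((1 / snd z1) *\<^sub>R fst z1)) + t * (snd z2 * h ((1 / snd z2) *\<^sub>R fst z2))"
    unfolding fz using calc unfolding z1 z2 fst_conv snd_conv .
qed (intro convex_Times convex_UNIV convex_real_interval)

lemma convex_neg_arg:
  assumes "convex_on UNIV h"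
  shows "convex_on UNIV (\<lambda>c. h (- c :: 'v::real_vector))"
proof (rule convex_onI)
  fix t :: real and x y :: 'v assume t: "0 < t" "t < 1"
  have "- ((1-t) *\<^sub>R x + t *\<^sub>R y) = (1-t) *\<^sub>R (-x) + t *\<^sub>R (-y)" by (simp add: algebra_simps)
  then show "h (- ((1 - t) *\<^sub>R x + t *\<^sub>R y)) \<le> (1 - t) * h (- x) + t * h (- y)"
    using convex_onD[OF assms, of t "-x" "-y"] t by simp
qed simp


lemma A_cont:
  fixes A :: "'n::euclidean_space \<Rightarrow> 'm::euclidean_space"
  assumes "linear (\<lambda>x. A x - A 0)"
  shows "continuous_on UNIV A"
proof -
  have "bounded_linear (\<lambda>x. A x - A 0)" using assms linear_conv_bounded_linear by blast
  then have "continuous_on UNIV (\<lambda>x. A x - A 0)" by (rule linear_continuous_on)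
  then have "continuous_on UNIV (\<lambda>x. (A x - A 0) + A 0)" by (rule continuous_on_add[OF _ continuous_on_const])
  moreover have eq: "(\<lambda>x. (A x - A 0) + A 0) = A" by (rule ext) simp
  ultimately show ?thesis by (simp only: eq)
qed

lemma PhiR_cont:
  fixes M :: "'m::euclidean_space set" and X :: "'n::euclidean_space set"
    and A :: "'n \<Rightarrow> 'm" and b :: "'k::finite \<Rightarrow> 'a \<Rightarrow> real"
  assumes good: "good_pair P M p (Fspace b)" and dens: "density_family P M p"
    and Aa: "linear (\<lambda>x. A x - A 0)" and AX: "A ` X \<subseteq> M"
  shows "continuous_on ((X \<times> X) \<times> (UNIV \<times> {0<..}))
        (\<lambda>((x, y), (c, \<alpha>)). PhiR P p A g r x y (fcomb b c) \<alpha>)"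
proof -
  define S where "S = (X \<times> X) \<times> ((UNIV :: (real^'k) set) \<times> {0::real<..})"
  have Ac: "continuous_on UNIV A" by (rule A_cont[OF Aa])
  have LHc: "continuous_on (M \<times> UNIV) (\<lambda>z. LH P p b (fst z) (snd z))" by (rule LH_joint[OF good dens])
  have cA2: "continuous_on S (\<lambda>z. A (snd (fst z)))"
    by (rule continuous_on_compose2[OF Ac]) (auto intro!: continuous_intros)
  have cA1: "continuous_on S (\<lambda>z. A (fst (fst z)))"
    by (rule continuous_on_compose2[OF Ac]) (auto intro!: continuous_intros)
  have cs: "continuous_on S (\<lambda>z. (1 / snd (snd z)) *\<^sub>R fst (snd z))"
    unfolding S_def by (intro continuous_intros) auto
  have pc2: "continuous_on S (\<lambda>z. (A (snd (fst z)), (1 / snd (snd z)) *\<^sub>R fst (snd z)))"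
    using cA2 cs by (rule continuous_on_Pair)
  have pc1: "continuous_on S (\<lambda>z. (A (fst (fst z)), - ((1 / snd (snd z)) *\<^sub>R fst (snd z))))"
    using cA1 continuous_on_minus[OF cs] by (rule continuous_on_Pair)
  have sub2: "(\<lambda>z. (A (snd (fst z)), (1 / snd (snd z)) *\<^sub>R fst (snd z))) ` S \<subseteq> M \<times> UNIV"
    using AX unfolding S_def by auto
  have sub1: "(\<lambda>z. (A (fst (fst z)), - ((1 / snd (snd z)) *\<^sub>R fst (snd z)))) ` S \<subseteq> M \<times> UNIV"
    using AX unfolding S_def by auto
  have c2: "continuous_on S (\<lambda>z. LH P p b (A (snd (fst z))) ((1 / snd (snd z)) *\<^sub>R fst (snd z)))"
    using continuous_on_compose2[OF LHc pc2 sub2] by simp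
  have c1: "continuous_on S (\<lambda>z. LH P p b (A (fst (fst z))) (- ((1 / snd (snd z)) *\<^sub>R fst (snd z))))"
    using continuous_on_compose2[OF LHc pc1 sub1] by simp
  have F: "continuous_on S (\<lambda>z. inner g (fst (fst z)) - inner g (snd (fst z))
     + snd (snd z) * LH P p b (A (snd (fst z))) ((1 / snd (snd z)) *\<^sub>R fst (snd z))
     + snd (snd z) * LH P p b (A (fst (fst z))) (- ((1 / snd (snd z)) *\<^sub>R fst (snd z)))
     + 2 * snd (snd z) * r)"
    by (intro continuous_intros c1 c2)
  show ?thesis unfolding S_def[symmetric]
  proof (rule continuous_on_cong[THEN iffD1, OF refl _ F])
    fix z assume z: "z \<in> S"
    obtain x y c \<alpha> where ze: "z = ((x, y), (c, \<alpha>))" by (metis prod.collapse)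
    have "\<alpha> \<noteq> 0" using z ze unfolding S_def by auto
    then show "inner g (fst (fst z)) - inner g (snd (fst z))
     + snd (snd z) * LH P p b (A (snd (fst z))) ((1 / snd (snd z)) *\<^sub>R fst (snd z))
     + snd (snd z) * LH P p b (A (fst (fst z))) (- ((1 / snd (snd z)) *\<^sub>R fst (snd z)))
     + 2 * snd (snd z) * r = (\<lambda>((x, y), (c, \<alpha>)). PhiR P p A g r x y (fcomb b c) \<alpha>) z"
      unfolding ze by (simp add: PhiR_LH)
  qed
qed

lemma lin_concave:
  fixes g :: "'n::real_inner"
  assumes "convex S"
  shows "concave_on S (\<lambda>z. inner g (fst z) - inner g (snd z) + k)"
  unfolding concave_on_iff
proof (intro conjI assms ballI allI impI)
  fix x y :: "'n \<times> 'n" and u v :: real assume h: "0 \<le> u" "0 \<le> v" "u + v = 1"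
  have k: "k = u * k + v * k" using h by (metis distrib_right mult_1)
  have "inner g (fst (u *\<^sub>R x + v *\<^sub>R y)) - inner g (snd (u *\<^sub>R x + v *\<^sub>R y))
      = u * (inner g (fst x) - inner g (snd x)) + v * (inner g (fst y) - inner g (snd y))"
    by (simp add: inner_add_right algebra_simps)
  then show "u * (inner g (fst x) - inner g (snd x) + k) + v * (inner g (fst y) - inner g (snd y) + k)
     \<le> inner g (fst (u *\<^sub>R x + v *\<^sub>R y)) - inner g (snd (u *\<^sub>R x + v *\<^sub>R y)) + k"
    using k by (simp add: algebra_simps)
qed

lemma PhiR_concave:
  fixes M :: "'m::euclidean_space set" and X :: "'n::euclidean_space set"
    and A :: "'n \<Rightarrow> 'm" and b :: "'k::finite \<Rightarrow> 'a \<Rightarrow> real"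
  assumes good: "good_pair P M p (Fspace b)"
    and Aa: "linear (\<lambda>x. A x - A 0)" and AX: "A ` X \<subseteq> M" and Xc: "convex X"
    and phi: "\<phi> \<in> Fspace b" and al: "\<alpha> > 0"
  shows "concave_on (X \<times> X) (\<lambda>(x, y). PhiR P p A g r x y \<phi> \<alpha>)"
proof -
  have f1: "(\<lambda>\<omega>. \<phi> \<omega> / \<alpha>) \<in> Fspace b"
  proof -
    have "(\<lambda>\<omega>. (1/\<alpha>) * \<phi> \<omega>) \<in> Fspace b" by (rule Fspace_scale[OF phi])
    moreover have "(\<lambda>\<omega>. (1/\<alpha>) * \<phi> \<omega>) = (\<lambda>\<omega>. \<phi> \<omega> / \<alpha>)" by (rule ext) simp
    ultimately show ?thesis by simp
  qed
  have f2: "(\<lambda>\<omega>. - \<phi> \<omega> / \<alpha>) \<in> Fspace b"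
  proof -
    have "(\<lambda>\<omega>. (-1/\<alpha>) * \<phi> \<omega>) \<in> Fspace b" by (rule Fspace_scale[OF phi])
    moreover have "(\<lambda>\<omega>. (-1/\<alpha>) * \<phi> \<omega>) = (\<lambda>\<omega>. - \<phi> \<omega> / \<alpha>)" by (rule ext) simp
    ultimately show ?thesis by simp
  qed
  have G1: "concave_on M (\<lambda>\<mu>. ln (\<integral>\<omega>. exp (\<phi> \<omega> / \<alpha>) * p \<mu> \<omega> \<partial>P))"
    using good_conc[OF good f1] by simp
  have G2: "concave_on M (\<lambda>\<mu>. ln (\<integral>\<omega>. exp (- \<phi> \<omega> / \<alpha>) * p \<mu> \<omega> \<partial>P))"
    using good_conc[OF good f2] by simp
  have XX: "convex (X \<times> X)" by (rule convex_Times[OF Xc Xc])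
  have L2: "concave_on (X \<times> X) (\<lambda>z. ln (\<integral>\<omega>. exp (\<phi> \<omega> / \<alpha>) * p (A (snd z)) \<omega> \<partial>P))"
    by (rule concave_on_affine_comp[OF G1 _ _ XX]) (use A_aff[OF Aa] AX in auto)
  have L1: "concave_on (X \<times> X) (\<lambda>z. ln (\<integral>\<omega>. exp (- \<phi> \<omega> / \<alpha>) * p (A (fst z)) \<omega> \<partial>P))"
    by (rule concave_on_affine_comp[OF G2 _ _ XX]) (use A_aff[OF Aa] AX in auto)
  have "concave_on (X \<times> X) (\<lambda>z. (inner g (fst z) - inner g (snd z) + 2 * \<alpha> * r)
     + \<alpha> * ln (\<integral>\<omega>. exp (\<phi> \<omega> / \<alpha>) * p (A (snd z)) \<omega> \<partial>P)
     + \<alpha> * ln (\<integral>\<omega>. exp (- \<phi> \<omega> / \<alpha>) * p (A (fst z)) \<omega> \<partial>P))"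
    using al by (intro concave_on_add lin_concave XX concave_on_cmul L1 L2) auto
  then show ?thesis
    by (rule concave_on_cong') (auto simp: PhiR_def)
qed

lemma lin_convex:
  assumes "convex S"
  shows "convex_on S (\<lambda>z::'v::real_vector \<times> real. k + 2 * snd z * r)"
  unfolding convex_on_def
proof (intro conjI assms ballI allI impI)
  fix x y :: "'v \<times> real" and u v :: real assume h: "0 \<le> u" "0 \<le> v" "u + v = 1"
  have k: "k = u * k + v * k" using h by (metis distrib_right mult_1)
  show "k + 2 * snd (u *\<^sub>R x + v *\<^sub>R y) * r \<le> u * (k + 2 * snd x * r) + v * (k + 2 * snd y * r)"
    using k by (simp add: algebra_simps)
qed

lemma PhiR_convex:
  fixes M :: "'m::euclidean_space set" and X :: "'n::euclidean_space set"
    and A :: "'n \<Rightarrow> 'm" and b :: "'k::finite \<Rightarrow> 'a \<Rightarrow> real"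
  assumes good: "good_pair P M p (Fspace b)" and dens: "density_family P M p"
    and x: "A x \<in> M" and y: "A y \<in> M"
  shows "convex_on (UNIV \<times> {0<..}) (\<lambda>(c, \<alpha>). PhiR P p A g r x y (fcomb b c) \<alpha>)"
proof -
  have h1: "convex_on UNIV (LH P p b (A y))" by (rule LH_convex[OF good dens y])
  have h2: "convex_on UNIV (\<lambda>c. LH P p b (A x) (- c))"
    by (rule convex_neg_arg[OF LH_convex[OF good dens x]])
  have Y: "convex ((UNIV :: (real^'k) set) \<times> {0::real<..})"
    by (intro convex_Times convex_UNIV convex_real_interval)
  have "convex_on (UNIV \<times> {0<..}) (\<lambda>z. (inner g x - inner g y + 2 * snd z * r)
      + snd z * LH P p b (A y) ((1 / snd z) *\<^sub>R fst z)
      + snd z * LH P p b (A x) (- ((1 / snd z) *\<^sub>R fst z)))"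
    by (intro convex_on_add lin_convex Y perspective[OF h1] perspective[OF h2, simplified])
  then show ?thesis
    by (rule convex_on_cong') (auto simp: PhiR_LH)
qed

lemma PhiR_diag:
  fixes M :: "'m::euclidean_space set"
    and A :: "'n::euclidean_space \<Rightarrow> 'm" and b :: "'k::finite \<Rightarrow> 'a \<Rightarrow> real"
  assumes good: "good_pair P M p (Fspace b)" and dens: "density_family P M p"
    and x: "A x \<in> M" and phi: "\<phi> \<in> Fspace b" and al: "\<alpha> > 0" and r: "r \<ge> 0"
  shows "PhiR P p A g r x x \<phi> \<alpha> \<ge> 0"
proof -
  obtain c where c: "\<phi> = fcomb b c" using Fspace_E[OF phi] by blast
  define c' where "c' = (1/\<alpha>) *\<^sub>R c"
  have cv: "convex_on UNIV (LH P p b (A x))" by (rule LH_convex[OF good dens x])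
  have "LH P p b (A x) ((1 - 1/2) *\<^sub>R c' + (1/2) *\<^sub>R (- c'))
     \<le> (1 - 1/2) * LH P p b (A x) c' + (1/2) * LH P p b (A x) (- c')"
    by (rule convex_onD[OF cv]) auto
  moreover have "(1 - 1/2) *\<^sub>R c' + (1/2) *\<^sub>R (- c') = (0 :: real^'k)" by (simp add: algebra_simps)
  ultimately have "0 \<le> LH P p b (A x) c' + LH P p b (A x) (- c')"
    using LH_zero[OF good dens x] by simp
  then have "0 \<le> \<alpha> * (LH P p b (A x) c' + LH P p b (A x) (- c'))" using al by simp
  moreover have "0 \<le> 2 * \<alpha> * r" using al r by simp
  ultimately show ?thesis unfolding c c'_def using al
    by (simp add: PhiR_LH distrib_left)
qed


theorem mainTheorem2:
  fixes P :: "'a::polish_space measure"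
    and M :: "'m::euclidean_space set"
    and p :: "'m \<Rightarrow> 'a \<Rightarrow> real"
    and b :: "'k::finite \<Rightarrow> 'a \<Rightarrow> real"
    and X :: "'n::euclidean_space set"
    and A :: "'n \<Rightarrow> 'm"
    and g :: "'n"
  assumes P_space: "space P = UNIV"
    and P_borel: "sets P = sets borel"
    and P_sigma: "sigma_finite_measure P"
    and dens: "density_family P M p"
    and b_borel: "\<And>k. b k \<in> borel_measurable borel"
    and F_const: "\<And>a::real. (\<lambda>\<omega>. a) \<in> Fspace b"
    and good: "good_pair P M p (Fspace b)"
    and X_ne: "X \<noteq> {}" and X_convex: "convex X" and X_compact: "compact X"
    and A_affine: "linear (\<lambda>x. A x - A 0)"
    and A_X: "A ` X \<subseteq> M"
  shows "(\<forall>r\<ge>0.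
      continuous_on ((X \<times> X) \<times> (UNIV \<times> {0<..}))
        (\<lambda>((x, y), (c, \<alpha>)). PhiR P p A g r x y (fcomb b c) \<alpha>)
    \<and> (\<forall>\<phi>\<in>Fspace b. \<forall>\<alpha>>0. concave_on (X \<times> X) (\<lambda>(x, y). PhiR P p A g r x y \<phi> \<alpha>))
    \<and> (\<forall>x\<in>X. \<forall>y\<in>X. convex_on (UNIV \<times> {0<..}) (\<lambda>(c, \<alpha>). PhiR P p A g r x y (fcomb b c) \<alpha>))
    \<and> (SUP xy\<in>X \<times> X. INF \<phi>\<alpha>\<in>Fspace b \<times> {0<..}.
          ereal (PhiR P p A g r (fst xy) (snd xy) (fst \<phi>\<alpha>) (snd \<phi>\<alpha>)))
        = (INF \<phi>\<alpha>\<in>Fspace b \<times> {0<..}. SUP xy\<in>X \<times> X.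
          ereal (PhiR P p A g r (fst xy) (snd xy) (fst \<phi>\<alpha>) (snd \<phi>\<alpha>)))
    \<and> (INF \<phi>\<alpha>\<in>Fspace b \<times> {0<..}. SUP xy\<in>X \<times> X.
          ereal (PhiR P p A g r (fst xy) (snd xy) (fst \<phi>\<alpha>) (snd \<phi>\<alpha>)))
        = 2 * PhiStar P p A g X (Fspace b) r)
    \<and> (\<forall>r\<ge>0. 0 \<le> PhiStar P p A g X (Fspace b) r \<and> PhiStar P p A g X (Fspace b) r < \<infinity>)
    \<and> concave_on {0..} (\<lambda>r. real_of_ereal (PhiStar P p A g X (Fspace b) r))"
proof -
  define K where "K = X \<times> X"
  define Y where "Y = (UNIV :: (real^'k) set) \<times> {0::real<..}"
  define f where "f r z w = PhiR P p A g r (fst z) (snd z) (fcomb b (fst w)) (snd w)" for r z w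
  have Kc: "compact K" unfolding K_def by (rule compact_Times[OF X_compact X_compact])
  have Kv: "convex K" unfolding K_def by (rule convex_Times[OF X_convex X_convex])
  have Kne: "K \<noteq> {}" unfolding K_def using X_ne by simp
  have Yv: "convex Y" unfolding Y_def by (intro convex_Times convex_UNIV convex_real_interval)
  have Yne: "Y \<noteq> {}" unfolding Y_def by auto
  have AXM: "\<And>x. x \<in> X \<Longrightarrow> A x \<in> M" using A_X by auto
  have cont: "\<And>r. continuous_on ((X \<times> X) \<times> (UNIV \<times> {0<..}))
        (\<lambda>((x, y), (c, \<alpha>)). PhiR P p A g r x y (fcomb b c) \<alpha>)"
    by (rule PhiR_cont[OF good dens A_affine A_X])
  have contK: "continuous_on K (\<lambda>z. f r z w)" if w: "w \<in> Y" for r w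
  proof -
    have c1: "continuous_on K (\<lambda>z. (z, w))" by (intro continuous_intros)
    have s1: "(\<lambda>z. (z, w)) ` K \<subseteq> (X \<times> X) \<times> (UNIV \<times> {0<..})" using w unfolding K_def Y_def by auto
    show ?thesis using continuous_on_compose2[OF cont[of r] c1 s1]
      by (simp add: f_def split_beta)
  qed
  have concK: "concave_on K (\<lambda>z. f r z w)" if w: "w \<in> Y" for r w
  proof -
    have "concave_on (X \<times> X) (\<lambda>(x, y). PhiR P p A g r x y (fcomb b (fst w)) (snd w))"
      by (rule PhiR_concave[OF good A_affine A_X X_convex fcomb_in]) (use w Y_def in auto)
    then show ?thesis unfolding K_def f_def by (simp add: case_prod_unfold)
  qed
  have convY: "convex_on Y (f r z)" if z: "z \<in> K" for r z
  proof -
    have "convex_on (UNIV \<times> {0<..}) (\<lambda>(c, \<alpha>). PhiR P p A g r (fst z) (snd z) (fcomb b c) \<alpha>)"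
      by (rule PhiR_convex[OF good dens]) (use z K_def AXM in auto)
    then show ?thesis unfolding Y_def f_def by (simp add: case_prod_unfold)
  qed
  have mm: "(SUP z\<in>K. INF w\<in>Y. ereal (f r z w)) = (INF w\<in>Y. SUP z\<in>K. ereal (f r z w))" for r
    by (rule minimax[OF Kc Kv]) (use contK concK convY Yv Yne in auto)
  have imgY: "Fspace b \<times> {0<..} = (\<lambda>w. (fcomb b (fst w), snd w)) ` Y"
    unfolding Y_def Fspace_def by (auto simp: image_iff)
  have reI: "(INF \<phi>\<alpha>\<in>Fspace b \<times> {0<..}. SUP xy\<in>X \<times> X.
          ereal (PhiR P p A g r (fst xy) (snd xy) (fst \<phi>\<alpha>) (snd \<phi>\<alpha>)))
      = (INF w\<in>Y. SUP z\<in>K. ereal (f r z w))" for r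
    unfolding imgY K_def f_def by (simp add: image_image)
  have reS: "(SUP xy\<in>X \<times> X. INF \<phi>\<alpha>\<in>Fspace b \<times> {0<..}.
          ereal (PhiR P p A g r (fst xy) (snd xy) (fst \<phi>\<alpha>) (snd \<phi>\<alpha>)))
      = (SUP z\<in>K. INF w\<in>Y. ereal (f r z w))" for r
    unfolding imgY K_def f_def by (simp add: image_image)
  define Q where "Q r = (INF w\<in>Y. SUP z\<in>K. ereal (f r z w))" for r
  have PS: "PhiStar P p A g X (Fspace b) r = ereal (1/2) * Q r" for r
    unfolding PhiStar_def reI Q_def ..
  have two: "ereal 2 * (ereal (1/2) * q) = q" for q :: ereal
    by (cases q) auto
  have "\<forall>w\<in>Y. \<exists>z\<in>K. \<forall>z'\<in>K. f 0 z' w \<le> f 0 z w"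
    using continuous_attains_sup[OF Kc Kne] contK by blast
  then obtain zm where zm: "\<And>w. w \<in> Y \<Longrightarrow> zm w \<in> K" "\<And>w z'. w \<in> Y \<Longrightarrow> z' \<in> K \<Longrightarrow> f 0 z' w \<le> f 0 (zm w) w"
    by metis
  have flin: "f r z w = f 0 z w + 2 * snd w * r" for r z w
    unfolding f_def PhiR_def by simp
  have zmr: "f r z' w \<le> f r (zm w) w" if "w \<in> Y" "z' \<in> K" for r w z'
    using zm(2)[OF that] flin[of r z' w] flin[of r "zm w" w] by simp
  have SUPeq: "(SUP z\<in>K. ereal (f r z w)) = ereal (f r (zm w) w)" if w: "w \<in> Y" for r w
  proof (rule antisym)
    show "(SUP z\<in>K. ereal (f r z w)) \<le> ereal (f r (zm w) w)"
      by (rule SUP_least) (use zmr w in auto)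
    show "ereal (f r (zm w) w) \<le> (SUP z\<in>K. ereal (f r z w))"
      by (rule SUP_upper) (use zm w in auto)
  qed
  have Qeq: "Q r = (INF w\<in>Y. ereal (f r (zm w) w))" for r
    unfolding Q_def by (rule INF_cong[OF refl]) (simp add: SUPeq)
  obtain x0 where x0: "x0 \<in> X" using X_ne by blast
  have Qfin: "0 \<le> Q r \<and> Q r < \<infinity>" if r: "r \<ge> 0" for r
  proof
    show "0 \<le> Q r" unfolding Qeq
    proof (rule INF_greatest)
      fix w assume w: "w \<in> Y"
      have "0 \<le> f r (x0, x0) w" unfolding f_def fst_conv snd_conv
        by (rule PhiR_diag[where A=A and x=x0, OF good dens AXM[OF x0] fcomb_in[of b "fst w"]]) (use w Y_def r in auto)
      also have "\<dots> \<le> f r (zm w) w" by (rule zmr) (use w x0 K_def in auto)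
      finally show "0 \<le> ereal (f r (zm w) w)" by simp
    qed
    have "(0, 1) \<in> Y" unfolding Y_def by simp
    then have "Q r \<le> ereal (f r (zm (0,1)) (0,1))" unfolding Qeq by (rule INF_lower)
    moreover have "ereal (f r (zm (0,1)) (0,1)) < \<infinity>" by simp
    ultimately show "Q r < \<infinity>" by (rule le_less_trans)
  qed
  define q where "q r = real_of_ereal (Q r)" for r
  have Qq: "Q r = ereal (q r)" if "r \<ge> 0" for r
    using Qfin[OF that] unfolding q_def by (cases "Q r") auto
  have qle: "q r \<le> f r (zm w) w" if "r \<ge> 0" "w \<in> Y" for r w
  proof -
    have "Q r \<le> ereal (f r (zm w) w)" unfolding Qeq using that(2) by (rule INF_lower)
    then show ?thesis using Qq[OF that(1)] by simp
  qed
  have qconc: "concave_on {0..} q"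
    unfolding concave_on_iff
  proof (intro conjI convex_real_interval ballI allI impI)
    fix r1 r2 u v :: real assume h: "r1 \<in> {0..}" "r2 \<in> {0..}" "0 \<le> u" "0 \<le> v" "u + v = 1"
    have r: "u * r1 + v * r2 \<ge> 0" using h by simp
    have "ereal (u * q r1 + v * q r2) \<le> Q (u *\<^sub>R r1 + v *\<^sub>R r2)" unfolding Qeq
    proof (rule INF_greatest)
      fix w assume w: "w \<in> Y"
      have "u * q r1 + v * q r2 \<le> u * f r1 (zm w) w + v * f r2 (zm w) w"
        using qle[of r1 w] qle[of r2 w] h w by (intro add_mono mult_left_mono) auto
      also have "\<dots> = f (u * r1 + v * r2) (zm w) w"
        using h flin[of r1 "zm w" w] flin[of r2 "zm w" w] flin[of "u * r1 + v * r2" "zm w" w]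
        by (simp add: algebra_simps) (metis distrib_left mult.commute mult_1 h(5))
      finally show "ereal (u * q r1 + v * q r2) \<le> ereal (f (u *\<^sub>R r1 + v *\<^sub>R r2) (zm w) w)" by simp
    qed
    then show "u * q r1 + v * q r2 \<le> q (u *\<^sub>R r1 + v *\<^sub>R r2)" using Qq[OF r] by simp
  qed
  show ?thesis
  proof (intro conjI allI impI ballI)
    fix r :: real assume r: "0 \<le> r"
    show "continuous_on ((X \<times> X) \<times> (UNIV \<times> {0<..}))
        (\<lambda>((x, y), (c, \<alpha>)). PhiR P p A g r x y (fcomb b c) \<alpha>)" by (rule cont)
    show "concave_on (X \<times> X) (\<lambda>(x, y). PhiR P p A g r x y \<phi> \<alpha>)"
      if "\<phi> \<in> Fspace b" "\<alpha> > 0" for \<phi> \<alpha>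
      using PhiR_concave[OF good A_affine A_X X_convex that] .
    show "convex_on (UNIV \<times> {0<..}) (\<lambda>(c, \<alpha>). PhiR P p A g r x y (fcomb b c) \<alpha>)"
      if "x \<in> X" "y \<in> X" for x y
      by (rule PhiR_convex[OF good dens]) (use that AXM in auto)
    show "(SUP xy\<in>X \<times> X. INF \<phi>\<alpha>\<in>Fspace b \<times> {0<..}.
          ereal (PhiR P p A g r (fst xy) (snd xy) (fst \<phi>\<alpha>) (snd \<phi>\<alpha>)))
        = (INF \<phi>\<alpha>\<in>Fspace b \<times> {0<..}. SUP xy\<in>X \<times> X.
          ereal (PhiR P p A g r (fst xy) (snd xy) (fst \<phi>\<alpha>) (snd \<phi>\<alpha>)))"
      unfolding reI reS by (rule mm)
    show "(INF \<phi>\<alpha>\<in>Fspace b \<times> {0<..}. SUP xy\<in>X \<times> X.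
          ereal (PhiR P p A g r (fst xy) (snd xy) (fst \<phi>\<alpha>) (snd \<phi>\<alpha>)))
        = 2 * PhiStar P p A g X (Fspace b) r"
      unfolding PS reI Q_def[symmetric] using two[of "Q r"] by simp
  next
    fix r :: real assume r: "0 \<le> r"
    show "0 \<le> PhiStar P p A g X (Fspace b) r" unfolding PS using Qfin[OF r] by simp
    show "PhiStar P p A g X (Fspace b) r < \<infinity>" unfolding PS Qq[OF r] by simp
  next
    have "concave_on {0..} (\<lambda>r. q r / 2)" by (rule concave_on_cdiv[OF _ qconc]) simp
    then show "concave_on {0..} (\<lambda>r. real_of_ereal (PhiStar P p A g X (Fspace b) r))"
      by (rule concave_on_cong') (simp add: PS Qq)
  qed
qed

end
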